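(* Let $d\ge1$, $\sigma>0$ with $1<\sigma d<2$, and $a>0$. Then there is no nontrivial solution $Q$ of $$Q''+\frac{d-1}{\rho}Q'-Q+ia\left(\frac{1}{\sigma}Q+\rho Q'\right)+|Q|^{2\sigma}Q=0,\ \ 0<\rho<\infty,\qquad Q'(0)=0,$$ such that $Q(\rho)\sim c_1\rho^{-i/a-1/\sigma}$ as $\rho\to\infty$ for some $c_1\in\mathbb{C}$ (i.e., in the large-$\rho$ asymptotic decomposition $Q\sim c_1Q_1+c_2Q_2$ with $Q_1\sim\rho^{-i/a-1/\sigma}$ and $Q_2\sim e^{-ia\rho^2/2}\rho^{i/a-d+1/\sigma}$, one always has $c_2\neq0$). *)

theory Defs
  imports "HOL-Analysis.Analysis"
begin

end

theory Submission
  imports Defs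
begin

lemma ode_parts:
  fixes q p s :: complex and d r a \<sigma> m :: real
  assumes "s + of_real ((d - 1) / r) * p - q + \<i> * of_real a * (of_real (1 / \<sigma>) * q + of_real r * p) + of_real m * q = 0"
  shows "Im (cnj q * s) = - ((d-1)/r) * Im (cnj q * p) - a * (Re (cnj q * q) / \<sigma> + r * Re (cnj q * p))"
    and "Re (cnj q * s) = - ((d-1)/r) * Re (cnj q * p) + Re (cnj q * q) + a * r * Im (cnj q * p) - m * Re (cnj q * q)"
proof -
  have s: "s = - (of_real ((d - 1) / r) * p) + q - \<i> * of_real a * (of_real (1 / \<sigma>) * q + of_real r * p) - of_real m * q"
    using assms by (simp add: algebra_simps eq_neg_iff_add_eq_0 [symmetric])
  show "Im (cnj q * s) = - ((d-1)/r) * Im (cnj q * p) - a * (Re (cnj q * q) / \<sigma> + r * Re (cnj q * p))"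
    unfolding s by (simp add: algebra_simps) (simp add: add_divide_distrib[symmetric] diff_divide_distrib[symmetric] algebra_simps)
  show "Re (cnj q * s) = - ((d-1)/r) * Re (cnj q * p) + Re (cnj q * q) + a * r * Im (cnj q * p) - m * Re (cnj q * q)"
    unfolding s by (simp add: algebra_simps) (simp add: add_divide_distrib[symmetric] diff_divide_distrib[symmetric] algebra_simps)
qed

lemma deriv_conjprod:
  fixes Q Q' :: "real \<Rightarrow> complex"
  assumes "(Q has_vector_derivative Q' r) (at r)" "(Q' has_vector_derivative Q'' r) (at r)"
  shows "((\<lambda>t. Im (cnj (Q t) * Q' t)) has_real_derivative Im (cnj (Q r) * Q'' r)) (at r)"
    and "((\<lambda>t. Re (cnj (Q t) * Q' t)) has_real_derivative (cmod (Q' r))^2 + Re (cnj (Q r) * Q'' r)) (at r)"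
    and "((\<lambda>t. Re (cnj (Q t) * Q t)) has_real_derivative 2 * Re (cnj (Q r) * Q' r)) (at r)"
proof -
  have A: "((\<lambda>t. cnj (Q t) * Q' t) has_vector_derivative (cnj (Q r) * Q'' r + cnj (Q' r) * Q' r)) (at r)"
    by (intro derivative_intros assms)
  have B: "((\<lambda>t. cnj (Q t) * Q t) has_vector_derivative (cnj (Q r) * Q' r + cnj (Q' r) * Q r)) (at r)"
    by (intro derivative_intros assms)
  show "((\<lambda>t. Im (cnj (Q t) * Q' t)) has_real_derivative Im (cnj (Q r) * Q'' r)) (at r)"
    using A unfolding has_vector_derivative_complex_iff by simp
  have "Re (cnj (Q' r) * Q' r) = (cmod (Q' r))^2"
    by (subst cmod_power2) (simp add: power2_eq_square)
  then show "((\<lambda>t. Re (cnj (Q t) * Q' t)) has_real_derivative (cmod (Q' r))^2 + Re (cnj (Q r) * Q'' r)) (at r)"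
    using A unfolding has_vector_derivative_complex_iff by (simp add: add.commute)
  show "((\<lambda>t. Re (cnj (Q t) * Q t)) has_real_derivative 2 * Re (cnj (Q r) * Q' r)) (at r)"
    using B unfolding has_vector_derivative_complex_iff by (simp add: algebra_simps)
qed

theorem lemma5:
  fixes d \<sigma> a :: real and Q Q' Q'' :: "real \<Rightarrow> complex"
  assumes hd: "d \<ge> 1" and hsig: "\<sigma> > 0" and hlow: "1 < \<sigma> * d" and hup: "\<sigma> * d < 2"
    and ha: "a > 0"
    and dQ: "\<And>r. r \<ge> 0 \<Longrightarrow> (Q has_vector_derivative Q' r) (at r within {0..})"
    and cQ': "continuous_on {0..} Q'"
    and dQ': "\<And>r. r > 0 \<Longrightarrow> (Q' has_vector_derivative Q'' r) (at r)"
    and ode: "\<And>r. r > 0 \<Longrightarrow>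
        Q'' r + of_real ((d - 1) / r) * Q' r - Q r
        + \<i> * of_real a * (of_real (1 / \<sigma>) * Q r + of_real r * Q' r)
        + of_real (cmod (Q r) powr (2 * \<sigma>)) * Q r = 0"
    and bc: "Q' 0 = 0"
    and nontriv: "\<exists>r\<ge>0. Q r \<noteq> 0"
  shows "\<not> (\<exists>c1::complex.
           ((\<lambda>\<rho>. \<rho> powr (1 / \<sigma>) *\<^sub>R
               (Q \<rho> - c1 * (complex_of_real \<rho>) powr (- \<i> / complex_of_real a - complex_of_real (1 / \<sigma>))))
             \<longlongrightarrow> 0) at_top)"
proof
  assume "\<exists>c1::complex.
           ((\<lambda>\<rho>. \<rho> powr (1 / \<sigma>) *\<^sub>R
               (Q \<rho> - c1 * (complex_of_real \<rho>) powr (- \<i> / complex_of_real a - complex_of_real (1 / \<sigma>))))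
             \<longlongrightarrow> 0) at_top"
  then obtain c1 :: complex where lim: "((\<lambda>\<rho>. \<rho> powr (1 / \<sigma>) *\<^sub>R
               (Q \<rho> - c1 * (complex_of_real \<rho>) powr (- \<i> / complex_of_real a - complex_of_real (1 / \<sigma>))))
             \<longlongrightarrow> 0) at_top" by blast
  define f where "f t = Re (cnj (Q t) * Q t)" for t
  define j where "j t = Im (cnj (Q t) * Q' t)" for t
  define k where "k t = Re (cnj (Q t) * Q' t)" for t
  define H where "H t = t powr (d-1) * j t + a/2 * (t powr d * f t)" for t
  define G where "G t = t powr (d-1) * k t" for t
  have sig0: "0 < 1/\<sigma> - d/2" using hup hsig by (simp add: field_simps)
  have f_eq: "f t = (cmod (Q t))^2" for t
    unfolding f_def by (subst cmod_power2) (simp add: power2_eq_square)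
  have f_nonneg: "f t \<ge> 0" for t by (simp add: f_eq)
  have dQa: "(Q has_vector_derivative Q' r) (at r)" if "r > 0" for r
  proof -
    have "at r within {0..} = at r"
      using that by (intro at_within_interior) auto
    then show ?thesis using dQ[of r] that by simp
  qed
  have dH: "(H has_real_derivative (- a * (1/\<sigma> - d/2) * (r powr (d-1) * f r))) (at r)" if r: "r > 0" for r
  proof -
    note D = deriv_conjprod[of Q Q' r Q'', OF dQa[OF r] dQ'[OF r]]
    have P1: "((\<lambda>t. t powr (d-1)) has_real_derivative (d-1) * r powr (d-1-1)) (at r)"
      by (rule has_real_derivative_powr[OF r])
    have P2: "((\<lambda>t. t powr d) has_real_derivative d * r powr (d-1)) (at r)"
      by (rule has_real_derivative_powr[OF r])
    have e1: "r powr (d-1-1) = r powr (d-1) / r" using r by (simp add: powr_diff power2_eq_square)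
    have e2: "r powr d = r * r powr (d-1)" using r by (simp add: powr_mult_base)
    have IM: "Im (cnj (Q r) * Q'' r) = - ((d-1)/r) * j r - a * (f r / \<sigma> + r * k r)"
      using ode_parts(1)[OF ode[OF r]] by (simp add: j_def f_def k_def)
    have DD: "(H has_real_derivative ((d-1)*r powr(d-1-1) * j r + Im (cnj (Q r) * Q'' r) * r powr (d-1)
       + a/2 * (d*r powr(d-1)*f r + 2 * k r * r powr d))) (at r)"
      unfolding H_def
      by (intro DERIV_add DERIV_cmult DERIV_mult P1 P2 D(1)[folded j_def] D(3)[folded f_def k_def])
    show ?thesis
      by (rule DERIV_cong[OF DD]) (unfold IM e1 e2, use r in \<open>simp add: field_simps\<close>)
  qed
  have df: "(f has_real_derivative 2 * k r) (at r)" if r: "r > 0" for r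
    using deriv_conjprod(3)[of Q Q' r Q'', OF dQa[OF r] dQ'[OF r], folded f_def k_def] by simp
  have dG: "(G has_real_derivative (r powr (d-1) * ((cmod (Q' r))^2 + f r - cmod (Q r) powr (2*\<sigma>) * f r)
        + a * r * (r powr (d-1) * j r))) (at r)" if r: "r > 0" for r
  proof -
    note D = deriv_conjprod[of Q Q' r Q'', OF dQa[OF r] dQ'[OF r]]
    have P1: "((\<lambda>t. t powr (d-1)) has_real_derivative (d-1) * r powr (d-1-1)) (at r)"
      by (rule has_real_derivative_powr[OF r])
    have e1: "r powr (d-1-1) = r powr (d-1) / r" using r by (simp add: powr_diff power2_eq_square)
    have RE: "Re (cnj (Q r) * Q'' r) = - ((d-1)/r) * k r + f r + a * r * j r - cmod (Q r) powr (2*\<sigma>) * f r"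
      using ode_parts(2)[OF ode[OF r]] by (simp add: j_def f_def k_def)
    have DD: "(G has_real_derivative ((d-1)*r powr(d-1-1) * k r + ((cmod (Q' r))^2 + Re (cnj (Q r) * Q'' r)) * r powr (d-1))) (at r)"
      unfolding G_def
      by (intro DERIV_mult P1 D(2)[folded k_def])
    show ?thesis
      by (rule DERIV_cong[OF DD]) (unfold RE e1, simp add: algebra_simps)
  qed
  have cQ0: "(Q \<longlongrightarrow> Q 0) (at_right 0)"
  proof -
    have "continuous (at 0 within {0..}) Q"
      using dQ[of 0] by (simp add: has_vector_derivative_continuous)
    then have "(Q \<longlongrightarrow> Q 0) (at 0 within {0..})" by (simp add: continuous_within)
    then show ?thesis by (rule tendsto_within_subset) auto
  qed
  have cQ'0: "(Q' \<longlongrightarrow> 0) (at_right 0)"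
  proof -
    have "(Q' \<longlongrightarrow> Q' 0) (at 0 within {0..})"
      using cQ' by (simp add: continuous_on_def)
    then have "(Q' \<longlongrightarrow> 0) (at 0 within {0..})" using bc by simp
    then show ?thesis by (rule tendsto_within_subset) auto
  qed
  have fcont0: "(f \<longlongrightarrow> f 0) (at_right 0)"
    unfolding f_def[abs_def] by (intro tendsto_Re tendsto_mult tendsto_cnj cQ0)
  have jlim: "(j \<longlongrightarrow> 0) (at_right 0)"
  proof -
    have "(j \<longlongrightarrow> Im (cnj (Q 0) * 0)) (at_right 0)"
      unfolding j_def[abs_def] by (intro tendsto_Im tendsto_mult tendsto_cnj cQ0 cQ'0)
    then show ?thesis by simp
  qed
  have Hlim: "(H \<longlongrightarrow> 0) (at_right 0)"
  proof -
    have ev01: "eventually (\<lambda>t. t \<in> {0<..<1}) (at_right (0::real))"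
      by (rule eventually_at_right_real) simp
    have t1: "((\<lambda>t. t powr (d-1) * j t) \<longlongrightarrow> 0) (at_right 0)"
    proof (rule Lim_null_comparison)
      show "eventually (\<lambda>t. norm (t powr (d-1) * j t) \<le> \<bar>j t\<bar>) (at_right 0)"
        using ev01
      proof eventually_elim
        case (elim t)
        then have "t powr (d-1) \<le> t powr 0" using hd by (intro powr_mono') auto
        then have "t powr (d-1) \<le> 1" using elim by simp
        then show ?case by (simp add: abs_mult mult_left_le_one_le)
      qed
      show "((\<lambda>t. \<bar>j t\<bar>) \<longlongrightarrow> 0) (at_right 0)"
        using tendsto_rabs[OF jlim] by simp
    qed
    have t2: "((\<lambda>t. t powr d * f t) \<longlongrightarrow> 0) (at_right 0)"
    proof (rule Lim_null_comparison)
      show "eventually (\<lambda>t. norm (t powr d * f t) \<le> t * f t) (at_right 0)"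
        using ev01
      proof eventually_elim
        case (elim t)
        then have "t powr d \<le> t" using hd by (intro powr_le_one_le) auto
        then show ?case using f_nonneg[of t] by (simp add: abs_mult mult_right_mono)
      qed
      have "((\<lambda>t. t * f t) \<longlongrightarrow> 0 * f 0) (at_right 0)"
        by (intro tendsto_intros fcont0)
      then show "((\<lambda>t. t * f t) \<longlongrightarrow> 0) (at_right 0)" by simp
    qed
    have "(H \<longlongrightarrow> 0 + a/2 * 0) (at_right 0)"
      unfolding H_def[abs_def] by (intro tendsto_add tendsto_mult tendsto_const t1 t2)
    then show ?thesis by simp
  qed
  have dHle: "\<exists>y. (H has_real_derivative y) (at x) \<and> y \<le> 0" if "x > 0" for x
    using dH[OF that] that ha sig0 f_nonneg[of x]
    by (intro exI[of _ "- a * (1/\<sigma> - d/2) * (x powr (d-1) * f x)"]) (simp add: mult_nonneg_nonneg)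
  have Hmono: "H t \<le> H s" if "0 < s" "s \<le> t" for s t
    using that by (intro DERIV_nonpos_imp_nonincreasing[of s t H] dHle) auto
  have Hle0: "H t \<le> 0" if "t > 0" for t
  proof (rule tendsto_lowerbound[OF Hlim])
    show "eventually (\<lambda>s. H t \<le> H s) (at_right 0)"
      using eventually_at_right_real[OF that] by eventually_elim (intro Hmono, auto)
  qed simp
  obtain r1 where r1: "r1 > 0" "Q r1 \<noteq> 0"
  proof -
    obtain r0 where r0: "r0 \<ge> 0" "Q r0 \<noteq> 0" using nontriv by blast
    show ?thesis
    proof (cases "r0 > 0")
      case True then show ?thesis using that r0 by blast
    next
      case False
      then have "r0 = 0" using r0 by simp
      then have "eventually (\<lambda>s. Q s \<noteq> 0) (at_right 0)"
        using tendsto_imp_eventually_ne[OF cQ0] r0 by simp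
      moreover have "eventually (\<lambda>s. s > (0::real)) (at_right 0)"
        by (simp add: eventually_at_right_less)
      ultimately have "eventually (\<lambda>s. s > 0 \<and> Q s \<noteq> 0) (at_right 0)"
        by eventually_elim simp
      then obtain s where "s > 0 \<and> Q s \<noteq> 0"
        using eventually_happens'[of "at_right (0::real)"] by auto
      then show ?thesis using that by blast
    qed
  qed
  have fr1: "f r1 > 0" using r1 by (simp add: f_eq)
  have "isCont f r1" using df[OF r1(1)] by (rule DERIV_isCont)
  then have "(f \<longlongrightarrow> f r1) (at r1)" by (simp add: isCont_def)
  then have "eventually (\<lambda>s. f s > 0) (at r1)" using fr1 by (rule order_tendstoD)
  then obtain \<delta> where \<delta>: "\<delta> > 0" "\<And>s. s \<noteq> r1 \<Longrightarrow> dist s r1 < \<delta> \<Longrightarrow> f s > 0"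
    unfolding eventually_at by auto
  define R0 where "R0 = r1 + \<delta>/2"
  have R0pos: "R0 > 0" using r1 \<delta> by (simp add: R0_def)
  have "H R0 < H r1"
  proof (rule DERIV_neg_imp_decreasing[of r1 R0 H])
    show "r1 < R0" using \<delta> by (simp add: R0_def)
    fix x assume x: "r1 \<le> x" "x \<le> R0"
    have xp: "x > 0" using x r1 by simp
    have "f x > 0"
    proof (cases "x = r1")
      case True then show ?thesis using fr1 by simp
    next
      case False then show ?thesis using x \<delta> by (intro \<delta>(2)) (auto simp: dist_real_def R0_def)
    qed
    then show "\<exists>y. (H has_real_derivative y) (at x) \<and> y < 0"
      using dH[OF xp] xp ha sig0
      by (intro exI[of _ "- a * (1/\<sigma> - d/2) * (x powr (d-1) * f x)"]) (simp add: mult_pos_pos)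
  qed
  define L0 where "L0 = - H R0"
  have L0pos: "L0 > 0" using \<open>H R0 < H r1\<close> Hle0[OF r1(1)] by (simp add: L0_def)
  have hbound: "R powr (d-1) * j R \<le> - L0" if "R \<ge> R0" for R
  proof -
    have "R powr (d-1) * j R = H R - a/2 * (R powr d * f R)" by (simp add: H_def)
    also have "\<dots> \<le> H R" using ha f_nonneg[of R] by simp
    also have "\<dots> \<le> H R0" using that R0pos by (intro Hmono) auto
    finally show ?thesis by (simp add: L0_def)
  qed
  define C where "C = (cmod c1 + 1)^2"
  have Cpos: "C > 0" unfolding C_def by (smt (verit) norm_ge_zero zero_less_power)
  have dsig: "d - 2/\<sigma> < 0" using hup hsig by (simp add: field_simps)
  have pw0: "((\<lambda>x::real. x powr (-2/\<sigma>)) \<longlongrightarrow> 0) at_top"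
    using hsig by (intro tendsto_neg_powr filterlim_ident) simp
  have pw1: "((\<lambda>x::real. x powr (d - 2/\<sigma>)) \<longlongrightarrow> 0) at_top"
    using dsig by (intro tendsto_neg_powr filterlim_ident) simp
  have ev1: "eventually (\<lambda>\<rho>. f \<rho> \<le> C * \<rho> powr (-2/\<sigma>)) at_top"
    using tendstoD[OF lim zero_less_one] eventually_gt_at_top[of 0]
  proof eventually_elim
    case (elim \<rho>)
    define z where "z = - \<i> / complex_of_real a - complex_of_real (1 / \<sigma>)"
    have Rez: "Re z = - 1/\<sigma>" by (simp add: z_def)
    have nphi: "cmod (complex_of_real \<rho> powr z) = \<rho> powr (-1/\<sigma>)"
      using elim(2) by (subst norm_powr_real_powr) (auto simp: Rez)
    have "\<rho> powr (1/\<sigma>) * cmod (Q \<rho> - c1 * complex_of_real \<rho> powr z) < 1"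
      using elim(1) elim(2) by (simp add: z_def dist_norm)
    then have "cmod (Q \<rho> - c1 * complex_of_real \<rho> powr z) < 1 / \<rho> powr (1/\<sigma>)"
      using elim(2) by (simp add: field_simps)
    also have "1 / \<rho> powr (1/\<sigma>) = \<rho> powr (-1/\<sigma>)"
      by (simp add: powr_minus divide_inverse)
    finally have e: "cmod (Q \<rho> - c1 * complex_of_real \<rho> powr z) < \<rho> powr (-1/\<sigma>)" .
    have "cmod (Q \<rho>) \<le> cmod (Q \<rho> - c1 * complex_of_real \<rho> powr z) + cmod (c1 * complex_of_real \<rho> powr z)"
      by (metis diff_add_cancel norm_triangle_ineq)
    also have "\<dots> \<le> \<rho> powr (-1/\<sigma>) + cmod c1 * \<rho> powr (-1/\<sigma>)"
      using e by (simp add: norm_mult nphi)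
    finally have q: "cmod (Q \<rho>) \<le> (cmod c1 + 1) * \<rho> powr (-1/\<sigma>)" by (simp add: algebra_simps)
    have "f \<rho> = (cmod (Q \<rho>))^2" by (rule f_eq)
    also have "\<dots> \<le> ((cmod c1 + 1) * \<rho> powr (-1/\<sigma>))^2"
      using q by (intro power_mono) auto
    also have "\<dots> = C * (\<rho> powr (-1/\<sigma>) * \<rho> powr (-1/\<sigma>))"
      by (simp add: C_def power2_eq_square)
    also have "\<rho> powr (-1/\<sigma>) * \<rho> powr (-1/\<sigma>) = \<rho> powr (-2/\<sigma>)"
      by (simp add: powr_add[symmetric])
    finally show ?case .
  qed
  have ev2: "eventually (\<lambda>\<rho>. C * \<rho> powr (-2/\<sigma>) < 1) at_top"
  proof -
    have "((\<lambda>\<rho>. C * \<rho> powr (-2/\<sigma>)) \<longlongrightarrow> C * 0) at_top" by (intro tendsto_intros pw0)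
    then show ?thesis by (rule order_tendstoD) simp
  qed
  have ev3: "eventually (\<lambda>\<rho>. 2 * a * C * \<rho> powr (d - 2/\<sigma>) < L0) at_top"
  proof -
    have "((\<lambda>\<rho>. 2 * a * C * \<rho> powr (d - 2/\<sigma>)) \<longlongrightarrow> 2 * a * C * 0) at_top" by (intro tendsto_intros pw1)
    then show ?thesis by (rule order_tendstoD) (use L0pos in simp)
  qed
  have "eventually (\<lambda>\<rho>. f \<rho> \<le> C * \<rho> powr (-2/\<sigma>) \<and> C * \<rho> powr (-2/\<sigma>) < 1
      \<and> 2 * a * C * \<rho> powr (d - 2/\<sigma>) < L0 \<and> \<rho> \<ge> max R0 1) at_top"
    using ev1 ev2 ev3 eventually_ge_at_top[of "max R0 1"] by eventually_elim auto
  then obtain R2 where R2: "\<And>\<rho>. \<rho> \<ge> R2 \<Longrightarrow> f \<rho> \<le> C * \<rho> powr (-2/\<sigma>) \<and> C * \<rho> powr (-2/\<sigma>) < 1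
      \<and> 2 * a * C * \<rho> powr (d - 2/\<sigma>) < L0 \<and> \<rho> \<ge> max R0 1"
    unfolding eventually_at_top_linorder by blast
  have fpos: "f \<rho> > 0" if "\<rho> \<ge> R2" for \<rho>
  proof (rule ccontr)
    assume "\<not> f \<rho> > 0"
    then have "f \<rho> = 0" using f_nonneg[of \<rho>] by simp
    then have "Q \<rho> = 0" by (simp add: f_eq)
    then have "j \<rho> = 0" by (simp add: j_def)
    then show False using hbound[of \<rho>] R2[OF that] L0pos by simp
  qed
  have key: "(\<rho> powr (d-1) * ((cmod (Q' \<rho>))^2 + f \<rho> - cmod (Q \<rho>) powr (2*\<sigma>) * f \<rho>)
        + a * \<rho> * (\<rho> powr (d-1) * j \<rho>)) \<ge> a * L0" if r: "\<rho> \<ge> R2" for \<rho>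
  proof -
    note RR = R2[OF r]
    have r1': "\<rho> \<ge> 1" "\<rho> \<ge> R0" using RR by auto
    have rp: "\<rho> > 0" using r1' by simp
    define P where "P = \<rho> powr (d-1)"
    define h where "h = P * j \<rho>"
    define u where "u = - h"
    define B where "B = P * f \<rho>"
    define p2 where "p2 = (cmod (Q' \<rho>))^2"
    have Ppos: "P > 0" using rp by (simp add: P_def)
    have fp: "f \<rho> > 0" using fpos[OF r] .
    have Bpos: "B > 0" using Ppos fp by (simp add: B_def)
    have uL: "u \<ge> L0" using hbound[OF r1'(2)] by (simp add: u_def h_def P_def)
    have f1: "f \<rho> \<le> 1" using RR by linarith
    have cq1: "cmod (Q \<rho>) \<le> 1"
    proof -
      have "(cmod (Q \<rho>))^2 \<le> 1^2" using f1 by (simp add: f_eq)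
      then show ?thesis by (rule power2_le_imp_le) simp
    qed
    have m1: "cmod (Q \<rho>) powr (2*\<sigma>) \<le> 1"
    proof -
      have "cmod (Q \<rho>) powr (2*\<sigma>) \<le> 1 powr (2*\<sigma>)"
        using cq1 hsig by (intro powr_mono2) auto
      then show ?thesis by simp
    qed
    have mf: "f \<rho> - cmod (Q \<rho>) powr (2*\<sigma>) * f \<rho> \<ge> 0"
      using m1 fp mult_right_mono[OF m1, of "f \<rho>"] by simp
    have jsq: "(j \<rho>)^2 \<le> f \<rho> * p2"
    proof -
      have "\<bar>j \<rho>\<bar> \<le> cmod (cnj (Q \<rho>) * Q' \<rho>)" unfolding j_def by (rule abs_Im_le_cmod)
      also have "\<dots> = cmod (Q \<rho>) * cmod (Q' \<rho>)" by (simp add: norm_mult)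
      finally have "(j \<rho>)^2 \<le> (cmod (Q \<rho>) * cmod (Q' \<rho>))^2"
        by (metis abs_ge_zero power2_abs power_mono)
      then show ?thesis by (simp add: f_eq p2_def power_mult_distrib)
    qed
    have X1: "P * p2 * B \<ge> h^2"
    proof -
      have "h^2 = P^2 * (j \<rho>)^2" by (simp add: h_def power_mult_distrib)
      also have "\<dots> \<le> P^2 * (f \<rho> * p2)" using jsq by (intro mult_left_mono) auto
      also have "\<dots> = P * p2 * B" by (simp add: B_def power2_eq_square)
      finally show ?thesis .
    qed
    have pw: "\<rho> * \<rho> powr (-2/\<sigma>) * P = \<rho> powr (d - 2/\<sigma>)"
    proof -
      have "\<rho> * P = \<rho> powr d" using rp by (simp add: P_def powr_mult_base)
      then have "\<rho> * \<rho> powr (-2/\<sigma>) * P = \<rho> powr d * \<rho> powr (-2/\<sigma>)" by (simp add: ac_simps)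
      also have "\<dots> = \<rho> powr (d - 2/\<sigma>)" by (simp add: powr_add[symmetric])
      finally show ?thesis .
    qed
    have X2: "2 * a * \<rho> * B \<le> L0"
    proof -
      have "2 * a * \<rho> * B = 2 * a * (\<rho> * f \<rho> * P)" by (simp add: B_def ac_simps)
      also have "\<dots> \<le> 2 * a * (\<rho> * (C * \<rho> powr (-2/\<sigma>)) * P)"
        using RR ha rp Ppos by (intro mult_left_mono mult_right_mono) auto
      also have "\<dots> = 2 * a * C * \<rho> powr (d - 2/\<sigma>)" using pw by (simp add: ac_simps)
      also have "\<dots> \<le> L0" using RR by simp
      finally show ?thesis .
    qed
    have u0: "u > 0" using uL L0pos by simp
    have "h^2 = u * u" by (simp add: u_def power2_eq_square)
    also have "\<dots> \<ge> u * L0" using uL u0 by (intro mult_left_mono) auto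
    finally have "u * L0 \<le> P * p2 * B" using X1 by simp
    moreover have "u * (2 * a * \<rho> * B) \<le> u * L0" using X2 u0 by (intro mult_left_mono) auto
    ultimately have "(2 * a * \<rho> * u) * B \<le> (P * p2) * B" by (simp add: ac_simps)
    then have X3: "2 * a * \<rho> * u \<le> P * p2" using Bpos by simp
    have "a * L0 \<le> a * \<rho> * L0" using ha L0pos r1' by simp
    also have "\<dots> \<le> a * \<rho> * u" using uL ha rp by (intro mult_left_mono) auto
    also have "\<dots> \<le> P * p2 - a * \<rho> * u" using X3 by (simp add: algebra_simps)
    also have "\<dots> \<le> P * (p2 + (f \<rho> - cmod (Q \<rho>) powr (2*\<sigma>) * f \<rho>)) - a * \<rho> * u"
      using Ppos mf by (simp add: algebra_simps)
    finally show ?thesis by (simp add: P_def u_def h_def p2_def algebra_simps)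
  qed
  define K where "K = a * L0"
  have Kpos: "K > 0" using ha L0pos by (simp add: K_def)
  have R2pos: "R2 > 0" using R2[of R2] by simp
  have Ggrow: "G t \<ge> G R2 + K * (t - R2)" if "t \<ge> R2" for t
  proof -
    have "(\<lambda>x. G x - K * x) R2 \<le> (\<lambda>x. G x - K * x) t"
    proof (rule DERIV_nonneg_imp_nondecreasing[OF that])
      fix x assume x: "R2 \<le> x" "x \<le> t"
      then have xp: "x > 0" using R2pos by simp
      show "\<exists>y. ((\<lambda>x. G x - K * x) has_real_derivative y) (at x) \<and> y \<ge> 0"
        using key[OF x(1)] unfolding K_def
        by (intro exI[of _ "(x powr (d-1) * ((cmod (Q' x))^2 + f x - cmod (Q x) powr (2*\<sigma>) * f x)
        + a * x * (x powr (d-1) * j x)) - a * L0"] conjI DERIV_diff dG[OF xp] DERIV_cmult_Id) auto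
    qed
    then show ?thesis by (simp add: algebra_simps)
  qed
  define T where "T = R2 + \<bar>G R2\<bar> / K + 1"
  have TR2: "T \<ge> R2" using Kpos by (simp add: T_def)
  have kpos: "k x > 0" if "x \<ge> T" for x
  proof -
    have xR: "x \<ge> R2" using that TR2 by simp
    have xp: "x > 0" using xR R2pos by simp
    have "K * (x - R2) \<ge> K * (\<bar>G R2\<bar> / K + 1)" using that Kpos by (intro mult_left_mono) (auto simp: T_def)
    also have "K * (\<bar>G R2\<bar> / K + 1) = \<bar>G R2\<bar> + K" using Kpos by (simp add: field_simps)
    finally have "G x > 0" using Ggrow[OF xR] Kpos by linarith
    then have "x powr (d-1) * k x > 0" by (simp add: G_def)
    then show ?thesis using xp by (simp add: zero_less_mult_iff)
  qed
  have fmono: "f T \<le> f s" if "s \<ge> T" for s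
  proof (rule DERIV_nonneg_imp_nondecreasing[OF that])
    fix x assume x: "T \<le> x" "x \<le> s"
    then have xp: "x > 0" using TR2 R2pos by simp
    show "\<exists>y. (f has_real_derivative y) (at x) \<and> y \<ge> 0"
      using df[OF xp] kpos[OF x(1)] by (intro exI[of _ "2 * k x"]) simp
  qed
  have fT: "f T > 0" using fpos[OF TR2] .
  have "eventually (\<lambda>\<rho>. C * \<rho> powr (-2/\<sigma>) < f T) at_top"
  proof -
    have "((\<lambda>\<rho>. C * \<rho> powr (-2/\<sigma>)) \<longlongrightarrow> C * 0) at_top" by (intro tendsto_intros pw0)
    then show ?thesis by (rule order_tendstoD) (use fT in simp)
  qed
  then obtain R3 where R3: "\<And>\<rho>. \<rho> \<ge> R3 \<Longrightarrow> C * \<rho> powr (-2/\<sigma>) < f T"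
    unfolding eventually_at_top_linorder by blast
  define s where "s = max R3 T"
  have "f T \<le> f s" using fmono by (simp add: s_def)
  also have "f s \<le> C * s powr (-2/\<sigma>)" using R2[of s] TR2 by (simp add: s_def)
  also have "\<dots> < f T" using R3[of s] by (simp add: s_def)
  finally show False by simp
qed

end
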